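(* Let $C$ denote the middle-thirds Cantor set. Then: (1) Every $u \in [0,1]$ can be written as $u = x^2 y$ for some $x,y \in C$. (2) The set of quotients from $C$ is \[ \left\{ \frac xy : x,y \in C,\ y \neq 0\right\} = \bigcup_{m=-\infty}^{\infty} \left[\tfrac23 \cdot 3^m, \tfrac32 \cdot 3^m\right]. \] (3) The set $\{xy : x,y \in C\}$ is a closed subset of $[0,1]$ whose Lebesgue measure is strictly greater than $\tfrac{17}{21}$.
   Context: The Cantor set is $C = \left\{\sum_{k=1}^\infty \alpha_k 3^{-k} : \alpha_k \in \{0,2\} \text{ for all } k\right\}$, i.e. the set of $x\in[0,1]$ admitting a ternary expansion using only the digits $0$ and $2$. *)

theory Defs
  imports "HOL-Analysis.Analysis"
begin

text \<open>Middle-thirds Cantor set: numbers sum_{k>=1} alpha_k 3^{-k} with alpha_k in {0,2}.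
  The digit sequence is indexed from 0 here, so digit alpha k carries weight 3^{-(k+1)}.\<close>
definition cantor_set :: "real set" where
  "cantor_set = {x. \<exists>\<alpha>::nat \<Rightarrow> real. (\<forall>k. \<alpha> k \<in> {0, 2}) \<and>
                      x = (\<Sum>k. \<alpha> k / 3 ^ (Suc k))}"

end

theory Submission
  imports Defs
begin


abbreviation "CS \<equiv> cantor_set"

definition cval :: "(nat \<Rightarrow> real) \<Rightarrow> real" where
  "cval \<alpha> = (\<Sum>k. \<alpha> k / 3 ^ (Suc k))"

definition digs :: "(nat \<Rightarrow> real) \<Rightarrow> bool" where
  "digs \<alpha> \<longleftrightarrow> (\<forall>k. \<alpha> k \<in> {0, 2})"

lemma CS_def': "CS = {x. \<exists>\<alpha>. digs \<alpha> \<and> x = cval \<alpha>}"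
  by (simp add: cantor_set_def digs_def cval_def)

lemma geo_sums: "(\<lambda>k. 2 / 3 ^ (Suc k) :: real) sums 1"
proof -
  have "(\<lambda>k. (1/3::real) ^ k) sums (1 / (1 - 1/3))"
    by (rule geometric_sums) simp
  then have "(\<lambda>k. (2/3) * (1/3::real) ^ k) sums ((2/3) * (1 / (1 - 1/3)))"
    by (rule sums_mult)
  then show ?thesis by (simp add: power_divide)
qed

lemma digs_bd: "digs \<alpha> \<Longrightarrow> 0 \<le> \<alpha> k / 3 ^ Suc k \<and> \<alpha> k / 3 ^ Suc k \<le> 2 / 3 ^ Suc k"
proof -
  assume "digs \<alpha>"
  then have "\<alpha> k = 0 \<or> \<alpha> k = 2" by (auto simp: digs_def)
  then show ?thesis by (elim disjE) (simp_all del: power_Suc)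
qed

lemma geo_summable: "summable (\<lambda>k. 2 / 3 ^ (Suc k) :: real)"
  using geo_sums sums_summable by blast

lemma digs_summable: "digs \<alpha> \<Longrightarrow> summable (\<lambda>k. \<alpha> k / 3 ^ (Suc k))"
proof (rule summable_comparison_test'[OF geo_summable])
  fix n assume "digs \<alpha>"
  then have "\<alpha> n = 0 \<or> \<alpha> n = 2" by (auto simp: digs_def)
  then show "norm (\<alpha> n / 3 ^ Suc n) \<le> 2 / 3 ^ Suc n"
    by (elim disjE) (simp_all del: power_Suc)
qed

lemma cval_nonneg: "digs \<alpha> \<Longrightarrow> 0 \<le> cval \<alpha>"
  unfolding cval_def
  by (rule suminf_nonneg[OF digs_summable]) (use digs_bd in auto)

lemma cval_le1: "digs \<alpha> \<Longrightarrow> cval \<alpha> \<le> 1"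
proof -
  assume d: "digs \<alpha>"
  have "cval \<alpha> \<le> (\<Sum>k. 2 / 3 ^ (Suc k) :: real)"
    unfolding cval_def
    by (rule suminf_le[OF _ digs_summable[OF d] geo_summable]) (use d digs_bd in auto)
  also have "\<dots> = 1" using geo_sums sums_unique by metis
  finally show ?thesis .
qed

lemma digs_Suc: "digs \<alpha> \<Longrightarrow> digs (\<lambda>k. \<alpha> (Suc k))"
  by (simp add: digs_def)

lemma cval_shift: "digs \<alpha> \<Longrightarrow> cval \<alpha> = \<alpha> 0 / 3 + cval (\<lambda>k. \<alpha> (Suc k)) / 3"
proof -
  assume d: "digs \<alpha>"
  have "(\<Sum>n. \<alpha> (Suc n) / 3 ^ Suc (Suc n)) = cval \<alpha> - \<alpha> 0 / 3"
    using suminf_split_head[OF digs_summable[OF d]] by (simp add: cval_def)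
  moreover have "(\<Sum>n. \<alpha> (Suc n) / 3 ^ Suc (Suc n)) = cval (\<lambda>k. \<alpha> (Suc k)) / 3"
  proof -
    have e: "(\<lambda>n. \<alpha> (Suc n) / 3 ^ Suc (Suc n)) = (\<lambda>n. (\<alpha> (Suc n) / 3 ^ Suc n) / 3)"
      by (simp add: field_simps)
    show ?thesis unfolding e cval_def
      by (rule suminf_divide[OF digs_summable[OF digs_Suc[OF d]]])
  qed
  ultimately show ?thesis by simp
qed

lemma digs_Suc_x: "digs \<alpha> \<Longrightarrow> digs (\<lambda>k. \<alpha> (Suc k))"
  by (simp add: digs_def)

lemma CS_split: "x \<in> CS \<longleftrightarrow> (\<exists>y\<in>CS. x = y / 3) \<or> (\<exists>y\<in>CS. x = (2 + y) / 3)"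
proof
  assume "x \<in> CS"
  then obtain \<alpha> where d: "digs \<alpha>" and x: "x = cval \<alpha>" by (auto simp: CS_def')
  have y: "cval (\<lambda>k. \<alpha> (Suc k)) \<in> CS" using digs_Suc[OF d] by (auto simp: CS_def')
  have "\<alpha> 0 = 0 \<or> \<alpha> 0 = 2" using d by (auto simp: digs_def)
  then show "(\<exists>y\<in>CS. x = y / 3) \<or> (\<exists>y\<in>CS. x = (2 + y) / 3)"
    using cval_shift[OF d] x y by (auto simp: add_divide_distrib)
next
  have gen: "\<exists>\<alpha>. digs \<alpha> \<and> (c + y) / 3 = cval \<alpha>" if yc: "y \<in> CS" and cc: "c = 0 \<or> c = 2" for c y
  proof -
    obtain \<beta> where d: "digs \<beta>" and y: "y = cval \<beta>" using yc unfolding CS_def' by blast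
    define \<alpha> where "\<alpha> = (\<lambda>k. case k of 0 \<Rightarrow> c | Suc j \<Rightarrow> \<beta> j)"
    have da: "digs \<alpha>" using d cc by (auto simp: digs_def \<alpha>_def split: nat.split)
    have "cval \<alpha> = (c + y) / 3" using cval_shift[OF da] y by (simp add: \<alpha>_def add_divide_distrib)
    with da show ?thesis by (intro exI[of _ \<alpha>]) simp
  qed
  assume "(\<exists>y\<in>CS. x = y / 3) \<or> (\<exists>y\<in>CS. x = (2 + y) / 3)"
  then show "x \<in> CS"
  proof
    assume "\<exists>y\<in>CS. x = y / 3"
    then obtain y where "y \<in> CS" "x = y / 3" by blast
    then show "x \<in> CS" using gen[of y 0] unfolding CS_def' by auto
  next
    assume "\<exists>y\<in>CS. x = (2 + y) / 3"
    then obtain y where "y \<in> CS" "x = (2 + y) / 3" by blast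
    then show "x \<in> CS" using gen[of y 2] unfolding CS_def' by auto
  qed
qed

lemma CS_01: "x \<in> CS \<Longrightarrow> 0 \<le> x \<and> x \<le> 1"
  by (auto simp: CS_def' cval_nonneg cval_le1)

lemma CS_cases:
  assumes "x \<in> CS"
  obtains y where "y \<in> CS" "x = y / 3" "0 \<le> y" "y \<le> 1"
    | y where "y \<in> CS" "x = (2 + y) / 3" "0 \<le> y" "y \<le> 1"
proof -
  from assms have "(\<exists>y\<in>CS. x = y / 3) \<or> (\<exists>y\<in>CS. x = (2 + y) / 3)" using CS_split by blast
  then show ?thesis
  proof
    assume "\<exists>y\<in>CS. x = y / 3"
    then obtain y where "y \<in> CS" "x = y / 3" by blast
    then show ?thesis using that(1) CS_01[of y] by blast
  next
    assume "\<exists>y\<in>CS. x = (2 + y) / 3"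
    then obtain y where "y \<in> CS" "x = (2 + y) / 3" by blast
    then show ?thesis using that(2) CS_01[of y] by blast
  qed
qed

lemma CS_gap: "x \<in> CS \<Longrightarrow> x \<le> 1/3 \<or> 2/3 \<le> x"
  by (erule CS_cases) auto

lemma CS_div3: "x \<in> CS \<Longrightarrow> x / 3 \<in> CS"
  using CS_split by blast

lemma CS_low: "x \<in> CS \<Longrightarrow> x \<le> 1/3 \<Longrightarrow> 3 * x \<in> CS"
  by (erule CS_cases) (auto simp: mult.commute)

lemma CS_high: "x \<in> CS \<Longrightarrow> 2/3 \<le> x \<Longrightarrow> 3 * x - 2 \<in> CS"
proof (erule CS_cases)
  fix y assume "y \<in> CS" "x = (2 + y) / 3"
  moreover then have "3 * x - 2 = y" by simp
  ultimately show "3 * x - 2 \<in> CS" by simp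
qed auto

lemma CS_0: "0 \<in> CS"
proof -
  have "digs (\<lambda>_. 0)" by (simp add: digs_def)
  moreover have "cval (\<lambda>_. 0) = 0" by (simp add: cval_def)
  ultimately show ?thesis unfolding CS_def' mem_Collect_eq by (intro exI[of _ "\<lambda>_. 0"]) simp
qed

lemma CS_1: "1 \<in> CS"
proof -
  have "digs (\<lambda>_. 2)" by (simp add: digs_def)
  moreover have "cval (\<lambda>_. 2) = 1" unfolding cval_def using sums_unique[OF geo_sums] by simp
  ultimately show ?thesis unfolding CS_def' mem_Collect_eq by (intro exI[of _ "\<lambda>_. 2"]) simp
qed

lemma CS_sym: "x \<in> CS \<Longrightarrow> 1 - x \<in> CS"
proof -
  assume "x \<in> CS"
  then obtain \<alpha> where d: "digs \<alpha>" and x: "x = cval \<alpha>" by (auto simp: CS_def')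
  have d': "digs (\<lambda>k. 2 - \<alpha> k)" using d by (auto simp: digs_def)
  have "(\<lambda>k. 2 / 3 ^ Suc k - \<alpha> k / 3 ^ Suc k) sums (1 - cval \<alpha>)"
    using sums_diff[OF geo_sums summable_sums[OF digs_summable[OF d]]] by (simp add: cval_def)
  moreover have "(\<lambda>k. (2 - \<alpha> k) / 3 ^ Suc k) = (\<lambda>k. 2 / 3 ^ Suc k - \<alpha> k / 3 ^ Suc k)"
    by (simp add: diff_divide_distrib)
  ultimately have "cval (\<lambda>k. 2 - \<alpha> k) = 1 - cval \<alpha>"
    unfolding cval_def using sums_unique by (metis (no_types))
  with d' x show ?thesis unfolding CS_def' mem_Collect_eq by (intro exI[of _ "\<lambda>k. 2 - \<alpha> k"]) simp
qed



primrec Kset :: "nat \<Rightarrow> real set" where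
  "Kset 0 = {0..1}"
| "Kset (Suc n) = (\<lambda>y. y / 3) ` Kset n \<union> (\<lambda>y. (2 + y) / 3) ` Kset n"

lemma Kset_compact: "compact (Kset n)"
proof (induction n)
  case 0 then show ?case by simp
next
  case (Suc n)
  have "compact ((\<lambda>y. y / 3) ` Kset n)"
    by (rule compact_continuous_image[OF _ Suc]) (intro continuous_intros, auto)
  moreover have "compact ((\<lambda>y. (2 + y) / 3) ` Kset n)"
    by (rule compact_continuous_image[OF _ Suc]) (intro continuous_intros, auto)
  ultimately show ?case by (simp add: compact_Un)
qed

lemma Kset_01: "x \<in> Kset n \<Longrightarrow> 0 \<le> x \<and> x \<le> 1"
proof (induction n arbitrary: x)
  case 0 then show ?case by simp
next
  case (Suc n)
  then obtain y where "y \<in> Kset n" "x = y / 3 \<or> x = (2 + y) / 3" by auto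
  with Suc.IH[of y] show ?case by auto
qed

lemma CS_Kset: "x \<in> CS \<Longrightarrow> x \<in> Kset n"
proof (induction n arbitrary: x)
  case 0 then show ?case using CS_01 by simp
next
  case (Suc n)
  then show ?case using CS_split[of x] by auto
qed

lemma Kset_CS:
  assumes K: "\<And>n. x \<in> Kset n"
  shows "x \<in> CS"
proof -
  define z :: "nat \<Rightarrow> real" where "z = rec_nat x (\<lambda>k zk. if zk \<le> 1/3 then 3*zk else 3*zk - 2)"
  define d :: "nat \<Rightarrow> real" where "d k = (if z k \<le> 1/3 then 0 else 2)" for k
  have z0: "z 0 = x" by (simp add: z_def)
  have zS: "z (Suc k) = (if z k \<le> 1/3 then 3 * z k else 3 * z k - 2)" for k by (simp add: z_def)
  have zK: "\<forall>n. z k \<in> Kset n" for k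
  proof (induction k)
    case 0 then show ?case using K z0 by simp
  next
    case (Suc k)
    show ?case
    proof
      fix n
      have "z k \<in> Kset (Suc n)" using Suc by blast
      then obtain y where y: "y \<in> Kset n" "z k = y / 3 \<or> z k = (2 + y) / 3" by auto
      have "0 \<le> y" "y \<le> 1" using Kset_01[OF y(1)] by auto
      then have "z (Suc k) = y" using y(2) zS[of k] by auto
      then show "z (Suc k) \<in> Kset n" using y by simp
    qed
  qed
  have z01: "0 \<le> z k \<and> z k \<le> 1" for k using zK[of k] Kset_01 by blast
  have dd: "digs d" by (simp add: digs_def d_def)
  have rel: "z k / 3 ^ k = d k / 3 ^ Suc k + z (Suc k) / 3 ^ Suc k" for k
    using zS[of k] by (simp add: d_def field_simps)
  have part: "x = (\<Sum>i<k. d i / 3 ^ Suc i) + z k / 3 ^ k" for k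
  proof (induction k)
    case 0 then show ?case by (simp add: z0)
  next
    case (Suc k) then show ?case using rel[of k] by simp
  qed
  have t1: "(\<lambda>k. \<Sum>i<k. d i / 3 ^ Suc i) \<longlonglongrightarrow> cval d"
    unfolding cval_def using summable_LIMSEQ[OF digs_summable[OF dd]] .
  have t2: "(\<lambda>k. z k / 3 ^ k) \<longlonglongrightarrow> 0"
  proof (rule Lim_null_comparison[OF _ LIMSEQ_inverse_realpow_zero[of 3]])
    show "\<forall>\<^sub>F k in sequentially. norm (z k / 3 ^ k) \<le> inverse (3 ^ k)"
      using z01 by (auto simp: divide_inverse intro!: always_eventually mult_left_le_one_le)
  qed simp
  have "(\<lambda>k. (\<Sum>i<k. d i / 3 ^ Suc i) + z k / 3 ^ k) \<longlonglongrightarrow> cval d + 0"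
    using t1 t2 by (rule tendsto_add)
  then have "(\<lambda>k. x) \<longlonglongrightarrow> cval d" using part by simp
  then have "x = cval d" using LIMSEQ_const_iff by blast
  with dd show ?thesis unfolding CS_def' by blast
qed

lemma CS_eq_INT: "CS = (\<Inter>n. Kset n)"
  using CS_Kset Kset_CS by blast

lemma CS_compact: "compact CS"
proof -
  have "closed CS" unfolding CS_eq_INT
    by (rule closed_INT) (simp add: Kset_compact compact_imp_closed)
  moreover have "bounded CS"
    by (rule bounded_subset[of "{0..1}"]) (auto dest: CS_01)
  ultimately show ?thesis by (simp add: compact_eq_bounded_closed)
qed

lemma CS_closed: "closed CS"
  using CS_compact compact_imp_closed by blast

definition CI :: "real \<Rightarrow> real \<Rightarrow> bool" where
  "CI a s \<longleftrightarrow> s > 0 \<and> (\<forall>x. (x \<in> CS \<and> a \<le> x \<and> x \<le> a + s) \<longleftrightarrow> (\<exists>y\<in>CS. x = a + s * y))"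

lemma CI_01: "CI 0 1"
  unfolding CI_def using CS_01 by auto

lemma CI_pos: "CI a s \<Longrightarrow> s > 0" by (simp add: CI_def)

lemma CI_mem: "CI a s \<Longrightarrow> a \<in> CS \<and> a + s \<in> CS"
  unfolding CI_def using CS_0 CS_1 by (metis add.right_neutral mult.right_neutral mult_zero_right)

lemma CI_elim: "CI a s \<Longrightarrow> x \<in> CS \<Longrightarrow> a \<le> x \<Longrightarrow> x \<le> a + s \<Longrightarrow> \<exists>y\<in>CS. x = a + s * y"
  unfolding CI_def by blast

lemma CI_intro: "CI a s \<Longrightarrow> y \<in> CS \<Longrightarrow> a + s * y \<in> CS"
  unfolding CI_def by blast

lemma CI_gap: "CI a s \<Longrightarrow> x \<in> CS \<Longrightarrow> a \<le> x \<Longrightarrow> x \<le> a + s \<Longrightarrow> (x \<le> a + s / 3) \<or> (a + 2 * s / 3 \<le> x)"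
proof -
  assume c: "CI a s" "x \<in> CS" "a \<le> x" "x \<le> a + s"
  then obtain y where y: "y \<in> CS" "x = a + s * y" using CI_elim by blast
  have s: "s > 0" using c CI_pos by blast
  from CS_gap[OF y(1)] show ?thesis
  proof
    assume "y \<le> 1/3" then have "s * y \<le> s * (1/3)" using s by (intro mult_left_mono) auto
    then show ?thesis using y by simp
  next
    assume "2/3 \<le> y" then have "s * (2/3) \<le> s * y" using s by (intro mult_left_mono) auto
    then show ?thesis using y by simp
  qed
qed

lemma CI_left: "CI a s \<Longrightarrow> CI a (s/3)"
proof -
  assume c: "CI a s"
  have s: "s > 0" using c CI_pos by blast
  have "(x \<in> CS \<and> a \<le> x \<and> x \<le> a + s / 3) \<longleftrightarrow> (\<exists>y\<in>CS. x = a + s / 3 * y)" for x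
  proof
    assume x: "x \<in> CS \<and> a \<le> x \<and> x \<le> a + s / 3"
    then obtain y where y: "y \<in> CS" "x = a + s * y" using CI_elim[OF c, of x] s by auto
    have "s * y \<le> s * (1/3)" using x y by simp
    then have "y \<le> 1/3" using s by (simp add: mult_le_cancel_left_pos)
    then have "3 * y \<in> CS" using CS_low y by blast
    moreover have "x = a + s / 3 * (3 * y)" using y by simp
    ultimately show "\<exists>y\<in>CS. x = a + s / 3 * y" by blast
  next
    assume "\<exists>y\<in>CS. x = a + s / 3 * y"
    then obtain y where y: "y \<in> CS" "x = a + s / 3 * y" by blast
    have "a + s * (y/3) \<in> CS" using CI_intro[OF c CS_div3[OF y(1)]] .
    moreover have "0 \<le> y" "y \<le> 1" using CS_01 y by auto
    moreover have "s * y \<le> s * 1" using \<open>y \<le> 1\<close> s by (intro mult_left_mono) auto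
    moreover have "0 \<le> s * y" using \<open>0 \<le> y\<close> s by simp
    ultimately show "x \<in> CS \<and> a \<le> x \<and> x \<le> a + s / 3" using y s by auto
  qed
  then show ?thesis unfolding CI_def using s by simp
qed

lemma CI_right: "CI a s \<Longrightarrow> CI (a + 2 * s / 3) (s/3)"
proof -
  assume c: "CI a s"
  have s: "s > 0" using c CI_pos by blast
  have "(x \<in> CS \<and> a + 2 * s / 3 \<le> x \<and> x \<le> a + 2 * s / 3 + s / 3) \<longleftrightarrow> (\<exists>y\<in>CS. x = a + 2 * s / 3 + s / 3 * y)" for x
  proof
    assume x: "x \<in> CS \<and> a + 2 * s / 3 \<le> x \<and> x \<le> a + 2 * s / 3 + s / 3"
    then obtain y where y: "y \<in> CS" "x = a + s * y" using CI_elim[OF c, of x] s by auto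
    have "s * (2/3) \<le> s * y" using x y by simp
    then have "2/3 \<le> y" using s by (simp add: mult_le_cancel_left_pos)
    then have "3 * y - 2 \<in> CS" using CS_high y by blast
    moreover have "x = a + 2 * s / 3 + s / 3 * (3 * y - 2)" using y by (simp add: algebra_simps)
    ultimately show "\<exists>y\<in>CS. x = a + 2 * s / 3 + s / 3 * y" by blast
  next
    assume "\<exists>y\<in>CS. x = a + 2 * s / 3 + s / 3 * y"
    then obtain y where y: "y \<in> CS" "x = a + 2 * s / 3 + s / 3 * y" by blast
    have "(2 + y) / 3 \<in> CS" using CS_split y by blast
    then have "a + s * ((2 + y)/3) \<in> CS" using CI_intro[OF c] by blast
    moreover have xe: "x = a + s * ((2 + y)/3)" using y by (simp add: algebra_simps)
    ultimately have xc: "x \<in> CS" by simp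
    have xe2: "x = a + 2 * s / 3 + (s * y) / 3" using y(2) by simp
    have "0 \<le> y" "y \<le> 1" using CS_01 y by auto
    moreover have "s * y \<le> s * 1" using \<open>y \<le> 1\<close> s by (intro mult_left_mono) auto
    moreover have "0 \<le> s * y" using \<open>0 \<le> y\<close> s by simp
    ultimately show "x \<in> CS \<and> a + 2 * s / 3 \<le> x \<and> x \<le> a + 2 * s / 3 + s / 3" using xc xe2 by auto
  qed
  then show ?thesis unfolding CI_def using s by simp
qed



lemma quadA:
  fixes f :: "real \<Rightarrow> real \<Rightarrow> real"
  assumes u: "f a b \<le> u" "u \<le> f (a+3*t) (b+3*t)"
    and c1: "f a (b+2*t) \<le> f (a+t) (b+t)"
    and c2: "f (a+2*t) b \<le> f (a+t) (b+3*t)"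
    and c3: "f (a+2*t) (b+2*t) \<le> f (a+3*t) (b+t)"
  shows "\<exists>i j. (i = 0 \<or> i = 2) \<and> (j = 0 \<or> j = (2::real)) \<and>
           f (a+i*t) (b+j*t) \<le> u \<and> u \<le> f (a+i*t+t) (b+j*t+t)"
proof -
  have e: "a + 2*t + t = a + 3*t" "b + 2*t + t = b + 3*t" by simp_all
  consider "u \<le> f (a+t) (b+t)" | "f (a+t) (b+t) < u" "u \<le> f (a+t) (b+3*t)"
    | "f (a+t) (b+3*t) < u" "u \<le> f (a+3*t) (b+t)" | "f (a+3*t) (b+t) < u" by linarith
  then show ?thesis
  proof cases
    case 1 then show ?thesis using u by (intro exI[of _ 0] exI[of _ 0]) simp
  next
    case 2 then show ?thesis using c1 by (intro exI[of _ 0] exI[of _ 2]) (simp add: e)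
  next
    case 3 then show ?thesis using c2 by (intro exI[of _ 2] exI[of _ 0]) (simp add: e)
  next
    case 4 then show ?thesis using c3 u by (intro exI[of _ 2] exI[of _ 2]) (simp add: e)
  qed
qed

lemma quadB:
  fixes f :: "real \<Rightarrow> real \<Rightarrow> real"
  assumes u: "f a b \<le> u" "u \<le> f (a+3*t) (b+3*t)"
    and c1: "f (a+2*t) b \<le> f (a+t) (b+t)"
    and c2: "f a (b+2*t) \<le> f (a+3*t) (b+t)"
    and c3: "f (a+2*t) (b+2*t) \<le> f (a+t) (b+3*t)"
  shows "\<exists>i j. (i = 0 \<or> i = 2) \<and> (j = 0 \<or> j = (2::real)) \<and>
           f (a+i*t) (b+j*t) \<le> u \<and> u \<le> f (a+i*t+t) (b+j*t+t)"
proof -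
  have e: "a + 2*t + t = a + 3*t" "b + 2*t + t = b + 3*t" by simp_all
  consider "u \<le> f (a+t) (b+t)" | "f (a+t) (b+t) < u" "u \<le> f (a+3*t) (b+t)"
    | "f (a+3*t) (b+t) < u" "u \<le> f (a+t) (b+3*t)" | "f (a+t) (b+3*t) < u" by linarith
  then show ?thesis
  proof cases
    case 1 then show ?thesis using u by (intro exI[of _ 0] exI[of _ 0]) simp
  next
    case 2 then show ?thesis using c1 by (intro exI[of _ 2] exI[of _ 0]) (simp add: e)
  next
    case 3 then show ?thesis using c2 by (intro exI[of _ 0] exI[of _ 2]) (simp add: e)
  next
    case 4 then show ?thesis using c3 u by (intro exI[of _ 2] exI[of _ 2]) (simp add: e)
  qed
qed

lemma cover:
  fixes f :: "real \<Rightarrow> real \<Rightarrow> real" and Q :: "real \<Rightarrow> real \<Rightarrow> real \<Rightarrow> bool"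
  assumes cf: "\<And>X Y x y. X \<longlonglongrightarrow> x \<Longrightarrow> Y \<longlonglongrightarrow> y \<Longrightarrow> (\<lambda>n. f (X n) (Y n)) \<longlonglongrightarrow> f x y"
    and Q0: "Q a0 b0 s0" and s0: "s0 > 0"
    and step: "\<And>a b s. Q a b s \<Longrightarrow> \<exists>a' b'. Q a' b' (s/3) \<and> a \<le> a' \<and> a' + s/3 \<le> a + s \<and> b \<le> b' \<and> b' + s/3 \<le> b + s"
    and inv: "\<And>a b s. Q a b s \<Longrightarrow> a \<in> CS \<and> b \<in> CS \<and> f a b \<le> u \<and> u \<le> f (a+s) (b+s)"
  shows "\<exists>x\<in>CS. \<exists>y\<in>CS. a0 \<le> x \<and> x \<le> a0 + s0 \<and> b0 \<le> y \<and> y \<le> b0 + s0 \<and> f x y = u"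
proof -
  define P where "P a b s a' b' \<longleftrightarrow> Q a' b' (s/3) \<and> a \<le> a' \<and> a' + s/3 \<le> a + s \<and> b \<le> b' \<and> b' + s/3 \<le> b + s" for a b s a' b'
  define sz :: "nat \<Rightarrow> real" where "sz n = s0 / 3 ^ n" for n
  define g :: "nat \<Rightarrow> real \<times> real" where
    "g = rec_nat (a0, b0) (\<lambda>n p. SOME q. P (fst p) (snd p) (sz n) (fst q) (snd q))"
  define A where "A n = fst (g n)" for n
  define B where "B n = snd (g n)" for n
  have szS: "sz (Suc n) = sz n / 3" for n by (simp add: sz_def)
  have gS: "g (Suc n) = (SOME q. P (A n) (B n) (sz n) (fst q) (snd q))" for n
    by (simp add: g_def A_def B_def)
  have QA: "Q (A n) (B n) (sz n)" for n
  proof (induction n)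
    case 0 then show ?case using Q0 by (simp add: A_def B_def g_def sz_def)
  next
    case (Suc n)
    obtain a' b' where "P (A n) (B n) (sz n) a' b'" using step[OF Suc] unfolding P_def by blast
    then have "P (A n) (B n) (sz n) (fst (a',b')) (snd (a',b'))" by simp
    then have "P (A n) (B n) (sz n) (A (Suc n)) (B (Suc n))"
      unfolding A_def B_def gS by (rule someI)
    then show ?case unfolding P_def szS by simp
  qed
  have PA: "P (A n) (B n) (sz n) (A (Suc n)) (B (Suc n))" for n
  proof -
    obtain a' b' where "P (A n) (B n) (sz n) a' b'" using step[OF QA[of n]] unfolding P_def by blast
    then have "P (A n) (B n) (sz n) (fst (a',b')) (snd (a',b'))" by simp
    then show ?thesis unfolding A_def B_def gS by (rule someI)
  qed
  have incA: "incseq A" and incB: "incseq B"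
    using PA unfolding P_def by (auto intro!: incseq_SucI)
  have decA: "decseq (\<lambda>n. A n + sz n)" and decB: "decseq (\<lambda>n. B n + sz n)"
    using PA unfolding P_def by (auto intro!: decseq_SucI simp: szS)
  have szpos: "sz n > 0" for n using s0 by (simp add: sz_def)
  have Ab: "A n \<le> A m + sz m" for n m
  proof (cases "m \<le> n")
    case True
    then have "A n + sz n \<le> A m + sz m" using decA by (simp add: decseq_def)
    then show ?thesis using szpos[of n] by linarith
  next
    case False
    then have "A n \<le> A m" using incA by (simp add: incseq_def)
    then show ?thesis using szpos[of m] by linarith
  qed
  have Bb: "B n \<le> B m + sz m" for n m
  proof (cases "m \<le> n")
    case True
    then have "B n + sz n \<le> B m + sz m" using decB by (simp add: decseq_def)
    then show ?thesis using szpos[of n] by linarith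
  next
    case False
    then have "B n \<le> B m" using incB by (simp add: incseq_def)
    then show ?thesis using szpos[of m] by linarith
  qed
  obtain x where x: "A \<longlonglongrightarrow> x" "\<And>i. A i \<le> x"
    using incseq_convergent[OF incA, of "A 0 + sz 0"] Ab by blast
  obtain y where y: "B \<longlonglongrightarrow> y" "\<And>i. B i \<le> y"
    using incseq_convergent[OF incB, of "B 0 + sz 0"] Bb by blast
  have sz0: "sz \<longlonglongrightarrow> 0"
  proof -
    have "(\<lambda>n. s0 * inverse (3 ^ n)) \<longlonglongrightarrow> s0 * 0"
      by (intro tendsto_mult tendsto_const LIMSEQ_inverse_realpow_zero) simp
    moreover have "sz = (\<lambda>n. s0 * inverse (3 ^ n))" by (simp add: fun_eq_iff sz_def divide_inverse)
    ultimately show ?thesis by simp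
  qed
  have xle: "x \<le> A m + sz m" for m
    using x(1) by (rule LIMSEQ_le_const2) (use Ab in auto)
  have yle: "y \<le> B m + sz m" for m
    using y(1) by (rule LIMSEQ_le_const2) (use Bb in auto)
  have A0: "A 0 = a0" "B 0 = b0" "sz 0 = s0" by (simp_all add: A_def B_def g_def sz_def)
  have xC: "x \<in> CS"
    using CS_closed x(1) inv[OF QA] closed_sequentially by blast
  have yC: "y \<in> CS"
    using CS_closed y(1) inv[OF QA] closed_sequentially by blast
  have t1: "(\<lambda>n. f (A n) (B n)) \<longlonglongrightarrow> f x y" using cf[OF x(1) y(1)] .
  have t2: "(\<lambda>n. f (A n + sz n) (B n + sz n)) \<longlonglongrightarrow> f x y"
    using cf[OF tendsto_add[OF x(1) sz0] tendsto_add[OF y(1) sz0]] by simp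
  have "f x y \<le> u"
    using t1 by (rule LIMSEQ_le_const2) (use inv[OF QA] in auto)
  moreover have "u \<le> f x y"
    using t2 by (rule LIMSEQ_le_const) (use inv[OF QA] in auto)
  ultimately have "f x y = u" by simp
  moreover have "a0 \<le> x" "x \<le> a0 + s0" "b0 \<le> y" "y \<le> b0 + s0"
    using x(2)[of 0] y(2)[of 0] xle[of 0] yle[of 0] A0 by auto
  ultimately show ?thesis using xC yC by blast
qed



lemma CI_child: "CI a s \<Longrightarrow> i = 0 \<or> i = 2 \<Longrightarrow> CI (a + i * (s/3)) (s/3)"
  using CI_left[of a s] CI_right[of a s] by (auto simp: algebra_simps)

lemma CI_23: "CI (2/3) (1/3)"
  using CI_right[OF CI_01] by simp

lemma CS_div_pow: "y \<in> CS \<Longrightarrow> y / 3 ^ k \<in> CS"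
proof (induction k)
  case 0 then show ?case by simp
next
  case (Suc k)
  then have "y / 3 ^ k / 3 \<in> CS" using CS_div3 by blast
  then show ?case by (simp add: field_simps)
qed

lemma scale_exists:
  fixes u :: real
  assumes "0 < u" "u \<le> 1"
  shows "\<exists>k::nat. 1/3 < 3 ^ k * u \<and> 3 ^ k * u \<le> 1"
proof -
  obtain n where n: "1 / u < 3 ^ n" using real_arch_pow[of 3 "1/u"] by auto
  then have ex: "1 < 3 ^ n * u" using assms by (simp add: field_simps)
  define m where "m = (LEAST n. 1 < 3 ^ n * (u::real))"
  have m1: "1 < 3 ^ m * u" unfolding m_def by (rule LeastI[of _ n]) (rule ex)
  have m0: "m \<noteq> 0"
  proof
    assume "m = 0"
    with m1 have "1 < u" by simp
    with assms show False by simp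
  qed
  then obtain k where k: "m = Suc k" by (cases m) auto
  have "\<not> 1 < 3 ^ k * u" using not_less_Least[of k "\<lambda>n. 1 < 3 ^ n * u"] k unfolding m_def by simp
  moreover have "1 < 3 * (3 ^ k * u)" using m1 k by simp
  ultimately show ?thesis by (intro exI[of _ k]) simp
qed

lemma sq_c1:
  fixes a b t :: real
  assumes "0 \<le> t" "0 \<le> a" "0 \<le> b" "a \<le> 2 * b"
  shows "a^2 * (b + 2*t) \<le> (a+t)^2 * (b+t)"
proof -
  have e: "(a+t)^2 * (b+t) - a^2 * (b + 2*t) = t * (a * (2*b - a) + t * (2*a + b) + t^2)"
    by (simp add: power2_eq_square algebra_simps)
  have "0 \<le> a * (2*b - a)" using assms by simp
  moreover have "0 \<le> t * (2*a + b)" using assms by simp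
  ultimately have "0 \<le> t * (a * (2*b - a) + t * (2*a + b) + t^2)" using assms by simp
  then show ?thesis using e by simp
qed

lemma sq_c2:
  fixes a b t :: real
  assumes "0 \<le> t" "0 \<le> a" "0 \<le> b" "2 * b \<le> 3 * a" "b \<le> 2 * a"
  shows "(a + 2*t)^2 * b \<le> (a+t)^2 * (b + 3*t)"
proof -
  have e: "(a+t)^2 * (b + 3*t) - (a + 2*t)^2 * b = t * (a * (3*a - 2*b) + 3 * t * (2*a - b) + 3 * t^2)"
    by (simp add: power2_eq_square algebra_simps)
  have "0 \<le> a * (3*a - 2*b)" using assms by simp
  moreover have "0 \<le> 3 * t * (2*a - b)" using assms by simp
  ultimately have "0 \<le> t * (a * (3*a - 2*b) + 3 * t * (2*a - b) + 3 * t^2)" using assms by simp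
  then show ?thesis using e by simp
qed

lemma sq_c3:
  fixes a b t :: real
  assumes "0 \<le> t" "0 \<le> a" "0 \<le> b" "a \<le> 2 * b" "2 * a \<le> 5 * b"
  shows "(a + 2*t)^2 * (b + 2*t) \<le> (a + 3*t)^2 * (b + t)"
proof -
  have e: "(a + 3*t)^2 * (b + t) - (a + 2*t)^2 * (b + 2*t) = t * (a * (2*b - a) + t * (5*b - 2*a) + t^2)"
    by (simp add: power2_eq_square algebra_simps)
  have "0 \<le> a * (2*b - a)" using assms by simp
  moreover have "0 \<le> t * (5*b - 2*a)" using assms by simp
  ultimately have "0 \<le> t * (a * (2*b - a) + t * (5*b - 2*a) + t^2)" using assms by simp
  then show ?thesis using e by simp
qed

lemma part1_core:
  fixes u :: real
  assumes u: "1/3 \<le> u" "u \<le> 1"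
  shows "\<exists>x\<in>CS. \<exists>y\<in>CS. u = x^2 * y"
proof -
  define Q where "Q a b s \<longleftrightarrow> CI a s \<and> CI b s \<and> 2/3 \<le> a \<and> a + s \<le> 1 \<and> 2/3 \<le> b \<and> b + s \<le> 1
      \<and> a^2 * b \<le> u \<and> u \<le> (a+s)^2 * (b+s)" for a b s :: real
  have "\<exists>x\<in>CS. \<exists>y\<in>CS. 2/3 \<le> x \<and> x \<le> 2/3 + 1/3 \<and> 2/3 \<le> y \<and> y \<le> 2/3 + 1/3 \<and> x^2 * y = u"
  proof (rule cover[where Q = Q])
    fix X Y :: "nat \<Rightarrow> real" and x y
    assume "X \<longlonglongrightarrow> x" "Y \<longlonglongrightarrow> y"
    then show "(\<lambda>n. (X n)^2 * Y n) \<longlonglongrightarrow> x^2 * y" by (intro tendsto_intros)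
  next
    show "Q (2/3) (2/3) (1/3)" unfolding Q_def using CI_23 u by (simp add: power2_eq_square)
  next
    show "(0::real) < 1/3" by simp
  next
    fix a b s assume q: "Q a b s"
    then have s: "s > 0" unfolding Q_def using CI_pos by blast
    have t: "0 \<le> s/3" using s by simp
    have ab: "0 \<le> a" "0 \<le> b" "a \<le> 2 * b" "2 * b \<le> 3 * a" "b \<le> 2 * a" "2 * a \<le> 5 * b"
      "b \<le> 2 * a" "2 * a \<le> 3 * b" "a \<le> 2 * b" "2 * b \<le> 5 * a"
      using q s unfolding Q_def by linarith+
    have "\<exists>i j. (i = 0 \<or> i = 2) \<and> (j = 0 \<or> j = (2::real)) \<and>
           (a+i*(s/3))^2 * (b+j*(s/3)) \<le> u \<and> u \<le> (a+i*(s/3)+s/3)^2 * (b+j*(s/3)+s/3)"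
    proof (rule quadA[where f = "\<lambda>x y. x^2 * y"])
      show "a^2 * b \<le> u" using q unfolding Q_def by simp
      show "u \<le> (a + 3 * (s/3))^2 * (b + 3 * (s/3))" using q unfolding Q_def by simp
      show "a^2 * (b + 2 * (s/3)) \<le> (a + s/3)^2 * (b + s/3)" using sq_c1[OF t ab(1,2,3)] .
      show "(a + 2 * (s/3))^2 * b \<le> (a + s/3)^2 * (b + 3 * (s/3))" using sq_c2[OF t ab(1,2,4,5)] .
      show "(a + 2 * (s/3))^2 * (b + 2 * (s/3)) \<le> (a + 3 * (s/3))^2 * (b + s/3)" using sq_c3[OF t ab(1,2,3,6)] .
    qed
    then obtain i j where ij: "i = 0 \<or> i = 2" "j = 0 \<or> j = (2::real)"
      "(a+i*(s/3))^2 * (b+j*(s/3)) \<le> u" "u \<le> (a+i*(s/3)+s/3)^2 * (b+j*(s/3)+s/3)" by blast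
    have ci: "CI (a + i*(s/3)) (s/3)" "CI (b + j*(s/3)) (s/3)"
      using CI_child ij q unfolding Q_def by blast+
    have bd: "a \<le> a + i*(s/3)" "a + i*(s/3) + s/3 \<le> a + s" "b \<le> b + j*(s/3)" "b + j*(s/3) + s/3 \<le> b + s"
      using ij(1,2) s by auto
    have "Q (a + i*(s/3)) (b + j*(s/3)) (s/3)"
      unfolding Q_def using ci bd ij(3,4) q unfolding Q_def by simp
    then show "\<exists>a' b'. Q a' b' (s/3) \<and> a \<le> a' \<and> a' + s/3 \<le> a + s \<and> b \<le> b' \<and> b' + s/3 \<le> b + s"
      using bd by blast
  next
    fix a b s assume "Q a b s"
    then show "a \<in> CS \<and> b \<in> CS \<and> a^2 * b \<le> u \<and> u \<le> (a+s)^2 * (b+s)"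
      unfolding Q_def using CI_mem by blast
  qed
  then show ?thesis by (metis (no_types))
qed

theorem part1: "\<forall>u \<in> {0..1::real}. \<exists>x \<in> CS. \<exists>y \<in> CS. u = x ^ 2 * y"
proof
  fix u :: real assume u: "u \<in> {0..1}"
  show "\<exists>x \<in> CS. \<exists>y \<in> CS. u = x ^ 2 * y"
  proof (cases "u = 0")
    case True then show ?thesis using CS_0 by (intro bexI[of _ 0]) auto
  next
    case False
    then obtain k :: nat where k: "1/3 < 3 ^ k * u" "3 ^ k * u \<le> 1" using scale_exists[of u] u by auto
    then obtain x y where xy: "x \<in> CS" "y \<in> CS" "3 ^ k * u = x^2 * y" using part1_core[of "3^k*u"] by auto
    have "u = x^2 * (y / 3 ^ k)" using xy(3) by (simp add: field_simps)
    then show ?thesis using xy CS_div_pow by blast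
  qed
qed



lemma linA:
  fixes r t a b :: real
  assumes "0 \<le> t" "r \<le> 1" "1 \<le> 3 * r"
  shows "a + r * (b + 2*t) \<le> (a + t) + r * (b + t)"
    and "(a + 2*t) + r * b \<le> (a + t) + r * (b + 3*t)"
    and "(a + 2*t) + r * (b + 2*t) \<le> (a + 3*t) + r * (b + t)"
proof -
  have h1: "r * t \<le> t" using assms mult_right_mono[of r 1 t] by simp
  have h2: "t \<le> 3 * r * t" using assms mult_right_mono[of 1 "3*r" t] by simp
  show "a + r * (b + 2*t) \<le> (a + t) + r * (b + t)" using h1 by (simp add: algebra_simps)
  show "(a + 2*t) + r * b \<le> (a + t) + r * (b + 3*t)" using h2 by (simp add: algebra_simps)
  show "(a + 2*t) + r * (b + 2*t) \<le> (a + 3*t) + r * (b + t)" using h1 by (simp add: algebra_simps)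
qed

lemma linB:
  fixes r t a b :: real
  assumes "0 \<le> t" "1 \<le> r" "r \<le> 3"
  shows "(a + 2*t) + r * b \<le> (a + t) + r * (b + t)"
    and "a + r * (b + 2*t) \<le> (a + 3*t) + r * (b + t)"
    and "(a + 2*t) + r * (b + 2*t) \<le> (a + t) + r * (b + 3*t)"
proof -
  have h1: "t \<le> r * t" using assms mult_right_mono[of 1 r t] by simp
  have h2: "r * t \<le> 3 * t" using assms mult_right_mono[of r 3 t] by simp
  show "(a + 2*t) + r * b \<le> (a + t) + r * (b + t)" using h1 by (simp add: algebra_simps)
  show "a + r * (b + 2*t) \<le> (a + 3*t) + r * (b + t)" using h2 by (simp add: algebra_simps)
  show "(a + 2*t) + r * (b + 2*t) \<le> (a + t) + r * (b + 3*t)" using h1 by (simp add: algebra_simps)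
qed

lemma ratio_core:
  fixes r :: real
  assumes r: "2/3 \<le> r" "r \<le> 3/2"
  shows "\<exists>x\<in>CS. \<exists>y\<in>CS. 2/3 \<le> x \<and> x \<le> 1 \<and> 2/3 \<le> y \<and> y \<le> 1 \<and> x = r * y"
proof -
  define Q where "Q a b s \<longleftrightarrow> CI a s \<and> CI b s \<and> 2/3 \<le> a \<and> a + s \<le> 1 \<and> 0 \<le> b \<and> b + s \<le> 1/3
      \<and> a + r * b \<le> r \<and> r \<le> (a+s) + r * (b+s)" for a b s :: real
  have CI0: "CI 0 (1/3)" using CI_left[OF CI_01] by simp
  have "\<exists>x\<in>CS. \<exists>y\<in>CS. 2/3 \<le> x \<and> x \<le> 2/3 + 1/3 \<and> 0 \<le> y \<and> y \<le> 0 + 1/3 \<and> x + r * y = r"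
  proof (rule cover[where Q = Q])
    fix X Y :: "nat \<Rightarrow> real" and x y
    assume "X \<longlonglongrightarrow> x" "Y \<longlonglongrightarrow> y"
    then show "(\<lambda>n. X n + r * Y n) \<longlonglongrightarrow> x + r * y" by (intro tendsto_intros)
  next
    show "Q (2/3) 0 (1/3)" unfolding Q_def using CI_23 CI0 r by simp
  next
    show "(0::real) < 1/3" by simp
  next
    fix a b s assume q: "Q a b s"
    then have s: "s > 0" unfolding Q_def using CI_pos by blast
    have t: "0 \<le> s/3" using s by simp
    have u: "a + r * b \<le> r" "r \<le> (a + 3 * (s/3)) + r * (b + 3 * (s/3))" using q unfolding Q_def by simp_all
    have "\<exists>i j. (i = 0 \<or> i = 2) \<and> (j = 0 \<or> j = (2::real)) \<and>
           (a+i*(s/3)) + r * (b+j*(s/3)) \<le> r \<and> r \<le> (a+i*(s/3)+s/3) + r * (b+j*(s/3)+s/3)"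
    proof (cases "r \<le> 1")
      case True
      have r3: "1 \<le> 3 * r" using r by linarith
      show ?thesis
        by (rule quadA[where f = "\<lambda>x y. x + r * y", OF u linA[OF t True r3]])
    next
      case False
      show ?thesis
        by (rule quadB[where f = "\<lambda>x y. x + r * y", OF u linB[OF t]]) (use r False in simp_all)
    qed
    then obtain i j where ij: "i = 0 \<or> i = 2" "j = 0 \<or> j = (2::real)"
      "(a+i*(s/3)) + r * (b+j*(s/3)) \<le> r" "r \<le> (a+i*(s/3)+s/3) + r * (b+j*(s/3)+s/3)" by blast
    have ci: "CI (a + i*(s/3)) (s/3)" "CI (b + j*(s/3)) (s/3)"
      using CI_child ij q unfolding Q_def by blast+
    have bd: "a \<le> a + i*(s/3)" "a + i*(s/3) + s/3 \<le> a + s" "b \<le> b + j*(s/3)" "b + j*(s/3) + s/3 \<le> b + s"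
      using ij(1,2) s by auto
    have "Q (a + i*(s/3)) (b + j*(s/3)) (s/3)"
      unfolding Q_def using ci bd ij(3,4) q unfolding Q_def by simp
    then show "\<exists>a' b'. Q a' b' (s/3) \<and> a \<le> a' \<and> a' + s/3 \<le> a + s \<and> b \<le> b' \<and> b' + s/3 \<le> b + s"
      using bd by blast
  next
    fix a b s assume "Q a b s"
    then show "a \<in> CS \<and> b \<in> CS \<and> a + r * b \<le> r \<and> r \<le> (a+s) + r * (b+s)"
      unfolding Q_def using CI_mem by blast
  qed
  then obtain x y where xy: "x \<in> CS" "y \<in> CS" "2/3 \<le> x" "x \<le> 1" "0 \<le> y" "y \<le> 1/3" "x + r * y = r"
    by auto
  have "1 - y \<in> CS" using CS_sym xy by blast
  moreover have "x = r * (1 - y)" using xy(7) by (simp add: algebra_simps)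
  ultimately show ?thesis using xy by (intro bexI[of _ x] bexI[of _ "1 - y"]) auto
qed

lemma CS_normalize:
  assumes "x \<in> CS" "0 < x"
  shows "\<exists>k::nat. 3 ^ k * x \<in> CS \<and> 2/3 \<le> 3 ^ k * x \<and> 3 ^ k * x \<le> 1"
proof -
  obtain k :: nat where k: "1/3 < 3 ^ k * x" "3 ^ k * x \<le> 1" using scale_exists[of x] assms CS_01 by auto
  have "j \<le> k \<Longrightarrow> 3 ^ j * x \<in> CS" for j
  proof (induction j)
    case 0 then show ?case using assms by simp
  next
    case (Suc j)
    then have "j < k" by simp
    then have "(3::real) ^ Suc j \<le> 3 ^ k" by (intro power_increasing) auto
    then have "3 ^ Suc j * x \<le> 3 ^ k * x" using assms by (intro mult_right_mono) auto
    then have "3 ^ j * x \<le> 1/3" using k by simp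
    then have "3 * (3 ^ j * x) \<in> CS" using CS_low Suc by auto
    then show ?case by (simp add: mult.assoc)
  qed
  then have c: "3 ^ k * x \<in> CS" by simp
  then have "2/3 \<le> 3 ^ k * x" using CS_gap[OF c] k by auto
  then show ?thesis using c k by blast
qed

lemma powr_int_nat: "(3::real) powr (real_of_int (int j - int i)) = 3 ^ j / 3 ^ i"
  by (simp add: powr_diff powr_realpow)

theorem part2: "{x / y | x y. x \<in> CS \<and> y \<in> CS \<and> y \<noteq> 0}
           = insert 0 (\<Union>m::int. {2/3 * 3 powr (real_of_int m) .. 3/2 * 3 powr (real_of_int m)})"
proof (intro equalityI subsetI)
  fix z assume "z \<in> {x / y | x y. x \<in> CS \<and> y \<in> CS \<and> y \<noteq> 0}"
  then obtain x y where xy: "x \<in> CS" "y \<in> CS" "y \<noteq> 0" "z = x / y" by blast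
  show "z \<in> insert 0 (\<Union>m::int. {2/3 * 3 powr (real_of_int m) .. 3/2 * 3 powr (real_of_int m)})"
  proof (cases "x = 0")
    case True then show ?thesis using xy by simp
  next
    case False
    then have xp: "0 < x" using CS_01 xy by force
    have yp: "0 < y" using CS_01 xy by force
    obtain i :: nat where i: "3 ^ i * x \<in> CS" "2/3 \<le> 3 ^ i * x" "3 ^ i * x \<le> 1" using CS_normalize xy(1) xp by blast
    obtain j :: nat where j: "3 ^ j * y \<in> CS" "2/3 \<le> 3 ^ j * y" "3 ^ j * y \<le> 1" using CS_normalize xy(2) yp by blast
    define x' where "x' = 3 ^ i * x"
    define y' where "y' = 3 ^ j * y"
    define m where "m = int j - int i"
    have q1: "2/3 \<le> x' / y'"
    proof -
      have "2/3 \<le> x'" "y' \<le> 1" "0 < y'" using i j yp by (auto simp: x'_def y'_def)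
      then show ?thesis by (simp add: field_simps)
    qed
    have q2: "x' / y' \<le> 3/2"
    proof -
      have "x' \<le> 1" "2/3 \<le> y'" using i j by (auto simp: x'_def y'_def)
      then show ?thesis by (simp add: field_simps)
    qed
    have pm: "3 powr (real_of_int m) = 3 ^ j / 3 ^ i" unfolding m_def by (rule powr_int_nat)
    have ze: "z = x' / y' * 3 powr (real_of_int m)" unfolding pm xy(4) x'_def y'_def
      using yp by (simp add: field_simps)
    have pp: "0 < 3 powr (real_of_int m)" by simp
    have "2/3 * 3 powr (real_of_int m) \<le> x' / y' * 3 powr (real_of_int m)"
      using mult_right_mono[OF q1, of "3 powr (real_of_int m)"] pp by simp
    moreover have "x' / y' * 3 powr (real_of_int m) \<le> 3/2 * 3 powr (real_of_int m)"
      using mult_right_mono[OF q2, of "3 powr (real_of_int m)"] pp by simp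
    ultimately have "z \<in> {2/3 * 3 powr (real_of_int m) .. 3/2 * 3 powr (real_of_int m)}"
      unfolding ze by simp
    then show ?thesis by blast
  qed
next
  fix z assume "z \<in> insert 0 (\<Union>m::int. {2/3 * 3 powr (real_of_int m) .. 3/2 * 3 powr (real_of_int m)})"
  then consider "z = 0" | m :: int where "2/3 * 3 powr (real_of_int m) \<le> z" "z \<le> 3/2 * 3 powr (real_of_int m)"
    by auto
  then show "z \<in> {x / y | x y. x \<in> CS \<and> y \<in> CS \<and> y \<noteq> 0}"
  proof cases
    case 1
    then show ?thesis unfolding mem_Collect_eq
      by (intro exI[of _ 0] exI[of _ 1]) (simp add: CS_0 CS_1)
  next
    case 2
    define p where "p = 3 powr (real_of_int m)"
    have pp: "0 < p" by (simp add: p_def)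
    define r where "r = z / p"
    have r: "2/3 \<le> r" "r \<le> 3/2" using 2 pp by (auto simp: r_def p_def field_simps)
    obtain x y where xy: "x \<in> CS" "y \<in> CS" "2/3 \<le> y" "x = r * y" using ratio_core[OF r] by blast
    have z: "z = x / y * p" using xy pp by (simp add: r_def field_simps)
    show ?thesis
    proof (cases "0 \<le> m")
      case True
      then obtain n :: nat where n: "m = int n" using nonneg_int_cases by blast
      have "p = 3 ^ n" using powr_int_nat[of n 0] by (simp add: p_def n)
      then have "z = x / (y / 3 ^ n)" using z by simp
      moreover have "y / 3 ^ n \<in> CS" "y / 3 ^ n \<noteq> 0" using CS_div_pow xy by auto
      ultimately show ?thesis using xy by blast
    next
      case False
      define n where "n = nat (- m)"
      have n: "m = - int n" using False by (simp add: n_def)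
      have "p = 1 / 3 ^ n" using powr_int_nat[of 0 n] by (simp add: p_def n)
      then have "z = (x / 3 ^ n) / y" using z by simp
      moreover have "x / 3 ^ n \<in> CS" "y \<noteq> 0" using CS_div_pow xy by auto
      ultimately show ?thesis using xy by blast
    qed
  qed
qed



definition G :: "real \<Rightarrow> real \<Rightarrow> real set" where
  "G a s = {x * y | x y. x \<in> CS \<and> y \<in> CS \<and> a \<le> x \<and> x \<le> a + s \<and> a \<le> y \<and> y \<le> a + s}"

lemma G_image: "G a s = (\<lambda>p. fst p * snd p) ` ((CS \<inter> {a..a+s}) \<times> (CS \<inter> {a..a+s}))"
  unfolding G_def by force

lemma G_compact: "compact (G a s)"
proof -
  have "compact (CS \<inter> {a..a+s})" using CS_compact by (intro compact_Int_closed) auto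
  then have "compact ((CS \<inter> {a..a+s}) \<times> (CS \<inter> {a..a+s}))" by (intro compact_Times)
  then show ?thesis unfolding G_image
    by (rule compact_continuous_image[rotated]) (intro continuous_intros)
qed

lemma G_lmeas: "G a s \<in> lmeasurable"
  using G_compact lmeasurable_compact by blast

lemma G_Int_lmeas: "G a s \<inter> {c..} \<in> lmeasurable" "G a s \<inter> {..c} \<in> lmeasurable"
  using G_compact by (auto intro!: lmeasurable_compact compact_Int_closed)

lemma G_sub: "0 \<le> a \<Longrightarrow> G a s \<subseteq> {a^2 .. (a+s)^2}"
proof
  fix z assume a: "0 \<le> a" and "z \<in> G a s"
  then obtain x y where xy: "z = x * y" "a \<le> x" "x \<le> a + s" "a \<le> y" "y \<le> a + s" unfolding G_def by blast
  have "a * a \<le> x * y" using xy a by (intro mult_mono) auto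
  moreover have "x * y \<le> (a + s) * (a + s)" using xy a by (intro mult_mono) auto
  ultimately show "z \<in> {a^2 .. (a+s)^2}" using xy by (simp add: power2_eq_square)
qed

lemma G_mono: "a \<le> a' \<Longrightarrow> a' + s' \<le> a + s \<Longrightarrow> G a' s' \<subseteq> G a s"
  unfolding G_def by fastforce

lemma prod_conds:
  fixes a b t :: real
  assumes "0 \<le> t" "a + t \<le> b" "b \<le> 3 * a" "0 \<le> a"
  shows "a * (b + 2*t) \<le> (a + t) * (b + t)"
    and "(a + 2*t) * b \<le> (a + t) * (b + 3*t)"
    and "(a + 2*t) * (b + 2*t) \<le> (a + 3*t) * (b + t)"
proof -
  have e1: "(a + t) * (b + t) - a * (b + 2*t) = t * (b - a + t)" by (simp add: algebra_simps)
  have e2: "(a + t) * (b + 3*t) - (a + 2*t) * b = t * (3*a - b + 3*t)" by (simp add: algebra_simps)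
  have e3: "(a + 3*t) * (b + t) - (a + 2*t) * (b + 2*t) = t * (b - a - t)" by (simp add: algebra_simps)
  have "0 \<le> t * (b - a + t)" using assms by simp
  then show "a * (b + 2*t) \<le> (a + t) * (b + t)" using e1 by simp
  have "0 \<le> t * (3*a - b + 3*t)" using assms by simp
  then show "(a + 2*t) * b \<le> (a + t) * (b + 3*t)" using e2 by simp
  have "0 \<le> t * (b - a - t)" using assms by simp
  then show "(a + 2*t) * (b + 2*t) \<le> (a + 3*t) * (b + t)" using e3 by simp
qed

lemma IB_sub:
  assumes c: "CI a s" and a: "2/3 \<le> a" "a + s \<le> 1"
  shows "{a * (a + 2*(s/3)) .. (a + s/3) * (a + s)} \<subseteq> G a s"
proof
  fix u assume u: "u \<in> {a * (a + 2*(s/3)) .. (a + s/3) * (a + s)}"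
  have s: "s > 0" using c CI_pos by blast
  define t where "t = s/3"
  have tp: "0 < t" using s by (simp add: t_def)
  define Q where "Q a' b' s' \<longleftrightarrow> CI a' s' \<and> CI b' s' \<and> a \<le> a' \<and> a' + s' \<le> a + t \<and> a + 2*t \<le> b' \<and> b' + s' \<le> a + s
      \<and> a' * b' \<le> u \<and> u \<le> (a'+s') * (b'+s')" for a' b' s' :: real
  have CIl: "CI a t" using CI_left[OF c] by (simp add: t_def)
  have CIr: "CI (a + 2*t) t" using CI_child[OF c, of 2] by (simp add: t_def)
  have "\<exists>x\<in>CS. \<exists>y\<in>CS. a \<le> x \<and> x \<le> a + t \<and> a + 2*t \<le> y \<and> y \<le> a + 2*t + t \<and> x * y = u"
  proof (rule cover[where Q = Q])
    fix X Y :: "nat \<Rightarrow> real" and x y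
    assume "X \<longlonglongrightarrow> x" "Y \<longlonglongrightarrow> y"
    then show "(\<lambda>n. X n * Y n) \<longlonglongrightarrow> x * y" by (intro tendsto_intros)
  next
    have "s = 3 * t" by (simp add: t_def)
    then show "Q a (a + 2*t) t" unfolding Q_def using CIl CIr u tp by (simp add: t_def algebra_simps)
  next
    show "0 < t" by (rule tp)
  next
    fix a' b' s' assume q: "Q a' b' s'"
    then have s': "s' > 0" unfolding Q_def using CI_pos by blast
    have t': "0 \<le> s'/3" using s' by simp
    have h: "a' + s'/3 \<le> b'" "b' \<le> 3 * a'" "0 \<le> a'" using q s' a tp unfolding Q_def by linarith+
    have "\<exists>i j. (i = 0 \<or> i = 2) \<and> (j = 0 \<or> j = (2::real)) \<and>
           (a'+i*(s'/3)) * (b'+j*(s'/3)) \<le> u \<and> u \<le> (a'+i*(s'/3)+s'/3) * (b'+j*(s'/3)+s'/3)"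
    proof (rule quadA[where f = "\<lambda>x y. x * y"])
      show "a' * b' \<le> u" using q unfolding Q_def by simp
      show "u \<le> (a' + 3 * (s'/3)) * (b' + 3 * (s'/3))" using q unfolding Q_def by simp
    qed (use prod_conds[OF t' h] in simp_all)
    then obtain i j where ij: "i = 0 \<or> i = 2" "j = 0 \<or> j = (2::real)"
      "(a'+i*(s'/3)) * (b'+j*(s'/3)) \<le> u" "u \<le> (a'+i*(s'/3)+s'/3) * (b'+j*(s'/3)+s'/3)" by blast
    have ci: "CI (a' + i*(s'/3)) (s'/3)" "CI (b' + j*(s'/3)) (s'/3)"
      using CI_child ij q unfolding Q_def by blast+
    have bd: "a' \<le> a' + i*(s'/3)" "a' + i*(s'/3) + s'/3 \<le> a' + s'" "b' \<le> b' + j*(s'/3)" "b' + j*(s'/3) + s'/3 \<le> b' + s'"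
      using ij(1,2) s' by auto
    have "Q (a' + i*(s'/3)) (b' + j*(s'/3)) (s'/3)"
      unfolding Q_def using ci bd ij(3,4) q unfolding Q_def by simp
    then show "\<exists>a'' b''. Q a'' b'' (s'/3) \<and> a' \<le> a'' \<and> a'' + s'/3 \<le> a' + s' \<and> b' \<le> b'' \<and> b'' + s'/3 \<le> b' + s'"
      using bd by blast
  next
    fix a' b' s' assume "Q a' b' s'"
    then show "a' \<in> CS \<and> b' \<in> CS \<and> a' * b' \<le> u \<and> u \<le> (a'+s') * (b'+s')"
      unfolding Q_def using CI_mem by blast
  qed
  then obtain x y where xy: "x \<in> CS" "y \<in> CS" "a \<le> x" "x \<le> a + t" "a + 2*t \<le> y" "y \<le> a + 2*t + t" "x * y = u"
    by blast
  have "a \<le> y" "x \<le> a + s" "y \<le> a + s" using xy tp by (auto simp: t_def)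
  then show "u \<in> G a s" unfolding G_def using xy by blast
qed



lemma G_step:
  assumes c: "CI a s" and a: "2/3 \<le> a" "a + s \<le> 1"
  shows "measure lebesgue (G a (s/3)) - measure lebesgue (G a (s/3) \<inter> {a*(a+2*(s/3))..})
       + ((a + s/3) * (a + s) - a * (a + 2*(s/3))) + measure lebesgue (G (a + 2*(s/3)) (s/3))
       \<le> measure lebesgue (G a s)"
proof -
  have s: "s > 0" using c CI_pos by blast
  define t where "t = s/3"
  have tp: "0 < t" using s by (simp add: t_def)
  have s3: "s = 3 * t" by (simp add: t_def)
  define c0 where "c0 = a * (a + 2*t)"
  define d where "d = (a + t) * (a + s)"
  define S1 where "S1 = G a t \<inter> {..c0}"
  define S1' where "S1' = G a t \<inter> {c0..}"
  define S2 where "S2 = {c0..d}"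
  define S3 where "S3 = G (a + 2*t) t"
  have m1: "S1 \<in> lmeasurable" "S1' \<in> lmeasurable" "S3 \<in> lmeasurable" "S2 \<in> lmeasurable"
    unfolding S1_def S1'_def S3_def S2_def using G_Int_lmeas G_lmeas by auto
  have cd: "c0 \<le> d" unfolding c0_def d_def s3 using tp a by (simp add: algebra_simps)
  have dlt: "d < (a + 2*t)^2" unfolding d_def s3 using tp by (simp add: power2_eq_square algebra_simps)
  have "G a t = S1 \<union> S1'" unfolding S1_def S1'_def by auto
  then have f1: "measure lebesgue (G a t) \<le> measure lebesgue S1 + measure lebesgue S1'"
    using measure_Un_le[of S1 lebesgue S1'] m1 by (simp add: fmeasurableD)
  have i12: "S1 \<inter> S2 \<in> lmeasurable" using m1 by (intro fmeasurable.Int)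
  have sing: "{c0} \<in> lmeasurable" by (rule lmeasurable_compact) simp
  have "measure lebesgue (S1 \<inter> S2) \<le> measure lebesgue {c0}"
    by (rule measure_mono_fmeasurable[OF _ fmeasurableD[OF i12] sing]) (auto simp: S1_def S2_def)
  moreover have "measure lebesgue {c0} = 0" by simp
  ultimately have "measure lebesgue (S1 \<inter> S2) = 0" using measure_nonneg[of lebesgue "S1 \<inter> S2"] by simp
  then have u12: "measure lebesgue (S1 \<union> S2) = measure lebesgue S1 + measure lebesgue S2"
    using measure_Un3[OF m1(1) m1(4)] by simp
  have "S3 \<subseteq> {(a + 2*t)^2..}" using G_sub[of "a + 2*t" t] a tp unfolding S3_def by auto
  moreover have "S1 \<union> S2 \<subseteq> {..d}" using cd unfolding S1_def S2_def by auto
  ultimately have "(S1 \<union> S2) \<inter> S3 = {}" using dlt by fastforce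
  then have u123: "measure lebesgue ((S1 \<union> S2) \<union> S3) = measure lebesgue S1 + measure lebesgue S2 + measure lebesgue S3"
    using measure_Un3[of "S1 \<union> S2" lebesgue S3] m1 u12 by (simp add: fmeasurable.Un)
  have "S1 \<subseteq> G a s" unfolding S1_def using G_mono[of a a t s] tp by (auto simp: s3)
  moreover have "S2 \<subseteq> G a s" unfolding S2_def c0_def d_def t_def using IB_sub[OF c a] by simp
  moreover have "S3 \<subseteq> G a s" unfolding S3_def using G_mono[of a "a + 2*t" t s] tp by (auto simp: s3)
  ultimately have f2: "measure lebesgue ((S1 \<union> S2) \<union> S3) \<le> measure lebesgue (G a s)"
    by (intro measure_mono_fmeasurable) (auto intro: G_lmeas fmeasurableD m1)
  have f3: "measure lebesgue S2 = d - c0" unfolding S2_def using cd by simp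
  show ?thesis unfolding t_def[symmetric]
    using f1 f2 f3 u123 unfolding S1'_def S3_def c0_def d_def by linarith
qed

lemma G_upper:
  assumes "0 \<le> a" "0 \<le> t"
  shows "measure lebesgue (G a t \<inter> {a*(a+2*t)..}) \<le> t^2"
proof -
  have "measure lebesgue (G a t \<inter> {a*(a+2*t)..}) \<le> measure lebesgue {a*(a+2*t) .. (a+t)^2}"
    by (rule measure_mono_fmeasurable) (use G_sub[of a t] assms in \<open>auto intro: fmeasurableD G_Int_lmeas\<close>)
  moreover have "a*(a+2*t) \<le> (a+t)^2" by (simp add: power2_eq_square algebra_simps)
  moreover have "(a+t)^2 - a*(a+2*t) = t^2" by (simp add: power2_eq_square algebra_simps)
  ultimately show ?thesis by simp
qed

lemma G_bound:
  "\<forall>a s. CI a s \<and> 2/3 \<le> a \<and> a + s \<le> 1 \<longrightarrow>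
      (a+s)^2 - a^2 - s^2/7 - 3* s*(2/3)^N \<le> measure lebesgue (G a s)"
proof (induction N)
  case 0
  show ?case
  proof (intro allI impI)
    fix a s assume h: "CI a s \<and> 2/3 \<le> a \<and> a + s \<le> 1"
    then have s: "0 < s" using CI_pos by blast
    have b1: "s * (2*a + s - 3) \<le> 0" using h s by (intro mult_nonneg_nonpos) auto
    have b2: "(a+s)^2 - a^2 - s^2/7 - 3* s = s * (2*a + s - 3) - s^2/7"
      by (simp add: power2_eq_square algebra_simps)
    have b3: "0 \<le> s^2/7" by simp
    have b4: "0 \<le> measure lebesgue (G a s)" by (rule measure_nonneg)
    have b5: "3* s*(2/3::real)^0 = 3* s" by simp
    show "(a+s)^2 - a^2 - s^2/7 - 3* s*(2/3)^0 \<le> measure lebesgue (G a s)"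
      using b1 b2 b3 b4 b5 by linarith
  qed
next
  case (Suc N)
  show ?case
  proof (intro allI impI)
    fix a s assume h: "CI a s \<and> 2/3 \<le> a \<and> a + s \<le> 1"
    then have c: "CI a s" and a1: "2/3 \<le> a" and a2: "a + s \<le> 1" by auto
    have s: "0 < s" using c CI_pos by blast
    define t where "t = s/3"
    have tp: "0 < t" using s by (simp add: t_def)
    have s3: "s = 3 * t" by (simp add: t_def)
    define q where "q = ((2::real)/3)^N"
    have c1: "CI a t" using CI_left[OF c] by (simp add: t_def)
    have c2: "CI (a + 2*t) t" using CI_child[OF c, of 2] by (simp add: t_def)
    have i1: "(a+t)^2 - a^2 - t^2/7 - 3*t*q \<le> measure lebesgue (G a t)"
    proof -
      have "CI a t \<and> 2/3 \<le> a \<and> a + t \<le> 1" using c1 a1 a2 tp s3 by auto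
      then show ?thesis using Suc.IH[rule_format, of a t] unfolding q_def by blast
    qed
    have i2: "(a+2*t+t)^2 - (a+2*t)^2 - t^2/7 - 3*t*q \<le> measure lebesgue (G (a+2*t) t)"
    proof -
      have "CI (a+2*t) t \<and> 2/3 \<le> a+2*t \<and> a+2*t + t \<le> 1" using c2 a1 a2 tp s3 by auto
      then show ?thesis using Suc.IH[rule_format, of "a+2*t" t] unfolding q_def by blast
    qed
    have gs: "measure lebesgue (G a t) - measure lebesgue (G a t \<inter> {a*(a+2*t)..})
       + ((a + t) * (a + s) - a * (a + 2*t)) + measure lebesgue (G (a + 2*t) t)
       \<le> measure lebesgue (G a s)"
      using G_step[OF c a1 a2] unfolding t_def[symmetric] .
    have gu: "measure lebesgue (G a t \<inter> {a*(a+2*t)..}) \<le> t^2"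
      using G_upper[of a t] a1 tp by simp
    have key: "((a+t)^2 - a^2 - t^2/7 - 3*t*q) - t^2 + ((a+t)*(a+3*t) - a*(a+2*t))
        + ((a+2*t+t)^2 - (a+2*t)^2 - t^2/7 - 3*t*q)
        = (a+3*t)^2 - a^2 - (3*t)^2/7 - 3*(3*t)*((2/3)*q)"
      by (simp add: power2_eq_square algebra_simps)
    have "(a+s)^2 - a^2 - s^2/7 - 3* s*(2/3)^(Suc N) = (a+3*t)^2 - a^2 - (3*t)^2/7 - 3*(3*t)*((2/3)*q)"
      by (simp add: s3 q_def)
    then show "(a+s)^2 - a^2 - s^2/7 - 3* s*(2/3)^(Suc N) \<le> measure lebesgue (G a s)"
      using key i1 i2 gs gu unfolding s3 by linarith
  qed
qed

lemma G_lim: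
  assumes "CI a s" "2/3 \<le> a" "a + s \<le> 1"
  shows "(a+s)^2 - a^2 - s^2/7 \<le> measure lebesgue (G a s)"
proof -
  have "(\<lambda>N. (a+s)^2 - a^2 - s^2/7 - 3* s*((2::real)/3)^N) \<longlonglongrightarrow> (a+s)^2 - a^2 - s^2/7 - 3* s*0"
    by (intro tendsto_intros LIMSEQ_power_zero) simp
  then have "(a+s)^2 - a^2 - s^2/7 - 3* s*0 \<le> measure lebesgue (G a s)"
  proof (rule LIMSEQ_le_const2)
    show "\<exists>N. \<forall>n\<ge>N. (a+s)^2 - a^2 - s^2/7 - 3* s*((2::real)/3)^n \<le> measure lebesgue (G a s)"
      using G_bound assms by blast
  qed
  then show ?thesis by simp
qed

lemma gap_special:
  assumes x: "x \<in> CS" "2/3 \<le> x" "x \<le> 7/9" and y: "y \<in> CS" "2/3 \<le> y" "y \<le> 7/9"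
  shows "x * y \<le> 35343/59049 \<or> 35344/59049 \<le> x * y"
proof (rule ccontr)
  assume "\<not> ?thesis"
  then have g: "35343/59049 < x * y" "x * y < 35344/59049" by auto
  have c1: "CI (2/3) (1/9)" using CI_left[OF CI_23] by simp
  have c2: "CI (20/27) (1/27)" using CI_child[OF c1, of 2] by simp
  have c3: "CI (62/81) (1/81)" using CI_child[OF c2, of 2] by simp
  have step: "188/243 \<le> z" if z: "z \<in> CS" "2/3 \<le> z" "z \<le> 7/9" "35343/59049 < z * w" "w \<le> 7/9" "0 \<le> w" for z w
  proof -
    have "z * w \<le> z * (7/9)" using z by (intro mult_left_mono) auto
    then have z1: "61/81 < z" using z by linarith
    have "z \<le> 2/3 + 1/9/3 \<or> 2/3 + 2 * (1/9) / 3 \<le> z" using CI_gap[OF c1 z(1)] z by simp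
    then have z2: "60/81 \<le> z" using z1 by simp
    have "z \<le> 20/27 + 1/27/3 \<or> 20/27 + 2 * (1/27) / 3 \<le> z" using CI_gap[OF c2 z(1)] z z2 by simp
    then have z3: "62/81 \<le> z" using z1 by simp
    have "z \<le> 62/81 + 1/81/3 \<or> 62/81 + 2 * (1/81) / 3 \<le> z" using CI_gap[OF c3 z(1)] z z3 by simp
    moreover have "\<not> z \<le> 62/81 + 1/81/3"
    proof
      assume "z \<le> 62/81 + 1/81/3"
      then have "z * w \<le> (187/243) * (7/9)" using z by (intro mult_mono) auto
      then show False using z by simp
    qed
    ultimately show ?thesis by simp
  qed
  have hx: "188/243 \<le> x" using step[of x y] x y g by (simp add: mult.commute)
  have hy: "188/243 \<le> y" using step[of y x] x y g by (simp add: mult.commute)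
  have "(188/243) * (188/243) \<le> x * y" using hx hy by (intro mult_mono) auto
  then show False using g by simp
qed

lemma E_bound: "34/63 + 1/59049 \<le> measure lebesgue (G (2/3) (1/3))"
proof -
  have c1: "CI (2/3) (1/9)" using CI_left[OF CI_23] by simp
  have c2: "CI (8/9) (1/9)" using CI_child[OF CI_23, of 2] by simp
  have gs: "measure lebesgue (G (2/3) (1/9)) - measure lebesgue (G (2/3) (1/9) \<inter> {16/27..})
       + 15/81 + measure lebesgue (G (8/9) (1/9)) \<le> measure lebesgue (G (2/3) (1/3))"
    using G_step[OF CI_23] by simp
  have n1: "(2/3 + 1/9::real)^2 - (2/3)^2 - (1/9)^2/7 = 13/81 - 1/567" by (simp add: power2_eq_square)
  have n2: "(8/9 + 1/9::real)^2 - (8/9)^2 - (1/9)^2/7 = 17/81 - 1/567" by (simp add: power2_eq_square)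
  have l1: "13/81 - 1/567 \<le> measure lebesgue (G (2/3) (1/9))" using G_lim[OF c1] n1 by simp
  have l2: "17/81 - 1/567 \<le> measure lebesgue (G (8/9) (1/9))" using G_lim[OF c2] n2 by simp
  have sub: "G (2/3) (1/9) \<inter> {16/27..} \<subseteq> {16/27 .. 35343/59049} \<union> {35344/59049 .. 49/81}"
  proof
    fix z assume z: "z \<in> G (2/3) (1/9) \<inter> {16/27..}"
    then obtain x y where xy: "z = x * y" "x \<in> CS" "y \<in> CS" "2/3 \<le> x" "x \<le> 7/9" "2/3 \<le> y" "y \<le> 7/9"
      unfolding G_def by auto
    have "z \<in> {(2/3)^2 .. (2/3 + 1/9)^2}" using G_sub[of "2/3" "1/9"] z by auto
    then have "z \<le> 49/81" by (simp add: power2_eq_square)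
    then show "z \<in> {16/27 .. 35343/59049} \<union> {35344/59049 .. 49/81}"
      using gap_special[OF xy(2,4,5) xy(3,6,7)] z xy(1) by auto
  qed
  have "measure lebesgue (G (2/3) (1/9) \<inter> {16/27..})
      \<le> measure lebesgue ({16/27 .. 35343/59049} \<union> {35344/59049 .. 49/81::real})"
    by (rule measure_mono_fmeasurable[OF sub]) (auto intro: fmeasurableD G_Int_lmeas)
  also have "\<dots> \<le> measure lebesgue {16/27 .. 35343/59049::real} + measure lebesgue {35344/59049 .. 49/81::real}"
    by (rule measure_Un_le) auto
  also have "\<dots> = 728/59049" by simp
  finally have u: "measure lebesgue (G (2/3) (1/9) \<inter> {16/27..}) \<le> 728/59049" .
  show ?thesis using gs l1 l2 u by linarith
qed

lemma prodset_image: "{x * y | x y. x \<in> CS \<and> y \<in> CS} = (\<lambda>p. fst p * snd p) ` (CS \<times> CS)"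
  by force

lemma prodset_compact: "compact {x * y | x y. x \<in> CS \<and> y \<in> CS}"
  unfolding prodset_image
  by (rule compact_continuous_image[rotated]) (auto intro!: continuous_intros compact_Times CS_compact)

lemma prodset_01: "{x * y | x y. x \<in> CS \<and> y \<in> CS} \<subseteq> {0..1}"
proof
  fix z assume "z \<in> {x * y | x y. x \<in> CS \<and> y \<in> CS}"
  then obtain x y where "z = x * y" "x \<in> CS" "y \<in> CS" by blast
  then show "z \<in> {0..1}" using CS_01[of x] CS_01[of y] by (auto intro: mult_le_one)
qed

lemma part3_measure: "measure lebesgue {x * y | x y. x \<in> CS \<and> y \<in> CS} > 17 / 21"
proof -
  define P where "P = {x * y | x y. x \<in> CS \<and> y \<in> CS}"
  define E where "E = G (2/3) (1/3)"
  define F where "F k = (\<lambda>z. (1/3^k) * z) ` E" for k :: nat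
  have Esub: "E \<subseteq> {4/9 .. 1}" using G_sub[of "2/3" "1/3"] unfolding E_def by (simp add: power2_eq_square)
  have Ecomp: "compact E" unfolding E_def by (rule G_compact)
  have Fcomp: "compact (F k)" for k unfolding F_def
    by (rule compact_continuous_image[OF _ Ecomp]) (intro continuous_intros)
  have Fm: "F k \<in> lmeasurable" for k using Fcomp lmeasurable_compact by blast
  have Fmeas: "measure lebesgue (F k) = (1/3^k) * measure lebesgue E" for k
    unfolding F_def using measure_lebesgue_affine[of "1/3^k" 0 E] by simp
  have FP: "F k \<subseteq> P" for k
  proof
    fix z assume "z \<in> F k"
    then obtain w where w: "w \<in> E" "z = (1/3^k) * w" unfolding F_def by blast
    then obtain x y where xy: "w = x * y" "x \<in> CS" "y \<in> CS" unfolding E_def G_def by blast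
    have "z = x * (y / 3^k)" using w xy by simp
    then show "z \<in> P" unfolding P_def using xy CS_div_pow by blast
  qed
  have Fbd: "F k \<subseteq> {(4/9) / 3^k .. 1 / 3^k}" for k
  proof
    fix z assume "z \<in> F k"
    then obtain w where w: "w \<in> E" "z = (1/3^k) * w" unfolding F_def by blast
    then have "4/9 \<le> w" "w \<le> 1" using Esub by auto
    then show "z \<in> {(4/9) / 3^k .. 1 / 3^k}" using w by (auto simp: field_simps)
  qed
  have disj: "F i \<inter> F j = {}" if "i < j" for i j
  proof -
    have "(3::real) ^ Suc i \<le> 3 ^ j" using that by (intro power_increasing) auto
    then have "1 / (3::real) ^ j \<le> 1 / 3 ^ Suc i" by (intro divide_left_mono) auto
    moreover have "1 / (3::real) ^ Suc i < (4/9) / 3 ^ i" by (simp add: field_simps)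
    ultimately have "1 / (3::real) ^ j < (4/9) / 3 ^ i" by linarith
    then show ?thesis using Fbd[of i] Fbd[of j] by fastforce
  qed
  have pw: "pairwise (\<lambda>i j. disjnt (F i) (F j)) {..<11::nat}"
    unfolding pairwise_def disjnt_def
  proof (intro ballI impI)
    fix i j :: nat assume "i \<noteq> j"
    then show "F i \<inter> F j = {}" using disj[of i j] disj[of j i] by (cases "i < j") auto
  qed
  have U: "measure lebesgue (\<Union>k\<in>{..<11::nat}. F k) = (\<Sum>k<11. measure lebesgue (F k))"
    by (rule measure_UNION'[OF _ _ pw]) (auto intro: Fm)
  have sumeq: "(\<Sum>k<11::nat. measure lebesgue (F k)) = measure lebesgue E * (\<Sum>k<11::nat. (1/3)^k)"
    unfolding Fmeas by (simp add: sum_distrib_left power_one_over mult.commute)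
  have geo: "(\<Sum>k<11::nat. (1/3::real)^k) = 88573/59049"
    unfolding sum_gp_strict by (simp add: power_divide)
  have "(\<Union>k\<in>{..<11::nat}. F k) \<subseteq> P" using FP by blast
  moreover have "P \<in> lmeasurable" unfolding P_def using prodset_compact lmeasurable_compact by blast
  moreover have "(\<Union>k\<in>{..<11::nat}. F k) \<in> sets lebesgue"
    by (intro fmeasurableD fmeasurable.finite_UN) (auto intro: Fm)
  ultimately have "measure lebesgue (\<Union>k\<in>{..<11::nat}. F k) \<le> measure lebesgue P"
    by (intro measure_mono_fmeasurable)
  then have m: "measure lebesgue E * (88573/59049) \<le> measure lebesgue P" using U sumeq geo by simp
  have "(34/63 + 1/59049) * (88573/59049) \<le> measure lebesgue E * (88573/59049)"
    using E_bound unfolding E_def by (intro mult_right_mono) auto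
  moreover have "17/21 < (34/63 + 1/59049) * (88573/59049::real)" by simp
  ultimately show ?thesis using m unfolding P_def by linarith
qed


theorem theorem1p1:
  shows "(\<forall>u \<in> {0..1::real}. \<exists>x \<in> cantor_set. \<exists>y \<in> cantor_set. u = x ^ 2 * y)
       \<and> {x / y | x y. x \<in> cantor_set \<and> y \<in> cantor_set \<and> y \<noteq> 0}
           = insert 0 (\<Union>m::int. {2/3 * 3 powr (real_of_int m) .. 3/2 * 3 powr (real_of_int m)})
       \<and> closed {x * y | x y. x \<in> cantor_set \<and> y \<in> cantor_set}
       \<and> {x * y | x y. x \<in> cantor_set \<and> y \<in> cantor_set} \<subseteq> {0..1}
       \<and> measure lebesgue {x * y | x y. x \<in> cantor_set \<and> y \<in> cantor_set} > 17 / 21"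
  using part1 part2 compact_imp_closed[OF prodset_compact] prodset_01 part3_measure by blast

end
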